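(* Let $A$ be a finite alphabet, $w_1,\ldots,w_k,w'_1,\ldots,w'_{k'}\in A^*$, and $N=\max(|w_1|,\ldots,|w_k|,|w'_1|,\ldots,|w'_{k'}|)\ge1$. Then $\mathrm{WMIX}(w_1,\ldots,w_k)=\mathrm{WMIX}(w'_1,\ldots,w'_{k'})$ if and only if both \[\mathrm{WMIX}(w_1,\ldots,w_k)\cap A^{<N}=\mathrm{WMIX}(w'_1,\ldots,w'_{k'})\cap A^{<N}\] and \[\mathrm{Mtr}_N(\mathrm{WMIX}(w_1,\ldots,w_k))=\mathrm{Mtr}_N(\mathrm{WMIX}(w'_1,\ldots,w'_{k'})).\]
   Context: For $u,w\in A^*$, $|w|_u$ is the number of pairs $(x,y)\in A^*\times A^*$ with $xuy=w$. $\mathrm{WMIX}(w_1,\ldots,w_k)=\{w\in A^*\mid|w|_{w_1}=\cdots=|w|_{w_k}\}$. $A^{<N}$ is the set of words of length less than $N$. $\mathrm{suff}_n(w)$ is the suffix of length $n$ of $w$. A (directed) graph is $\mathcal G=(V,E)$ with $E\subseteq V\times V$. A walk is a sequence $\omega=(v_1,\ldots,v_n)\in V^n$, $n\ge1$, with $(v_i,v_{i+1})\in E$ for all $1\le i<n$; its length is $|\omega|=n-1$, its source is $v_1$ and its target is $v_n$. $V(\omega)=\{v_1,\ldots,v_n\}$. If the target of $\omega_1=(v_1,\ldots,v_m)$ equals the source of $\omega_2=(v'_1,\ldots,v'_n)$, then $\omega_1\odot\omega_2=(v_1,\ldots,v_m,v'_2,\ldots,v'_n)$. A loop is a non-empty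 walk whose source equals its target. A path is a walk whose vertices are pairwise distinct (empty walks are paths). A cycle is a loop $(v,v_1,\ldots,v_n,v)$ such that $(v,v_1,\ldots,v_n)$ is a path. $\mathcal W(\mathcal G),\mathcal P(\mathcal G),\mathcal C(\mathcal G)$ denote the sets of walks, paths and cycles. For a sequence of cycles $\Gamma=(\gamma_1,\ldots,\gamma_n)$: $|\Gamma|_\gamma=\#\{i\mid\gamma_i=\gamma\}$, $\Gamma.\gamma=(\gamma_1,\ldots,\gamma_n,\gamma)$; $\emptyset$ is the empty sequence. Decomposition $\mathrm{dec}_{\mathcal G}:\mathcal W(\mathcal G)\to\mathcal P(\mathcal G)\times\mathcal C(\mathcal G)^*$, by induction on length: $\mathrm{dec}_{\mathcal G}((v))=((v),\emptyset)$; for a walk $\omega$ with target $v$ and an edge $(v,v')$, let $(\pi,\Gamma)=\mathrm{dec}_{\mathcal G}(\omega)$ (the target of $\pi$ is $v$); if $v'\notin V(\pi)$ then $\mathrm{dec}_{\mathcal G}(\omega\odot(v,v'))=(\pi\odot(v,v'),\Gamma)$; otherwise, writing $\pi=(v_1,\ldots,v_{j-1},v',v_{j+1},\ldots,v)$, $\mathrm{dec}_{\mathcal G}(\omega\odot(v,v'))=((v_1,\ldots,v_{j-1},v'),\ \Gamma.(v',v_{j+1},\ldots,v,v'))$. Multi-trace: for $\omega\in\mathcal W(\mathcal G)$ with $(\pi_\omega,\Gamma)=\mathrm{dec}_{\mathcal G}(\omega)$, $\mathrm{mtr}(\omega):\mathcal P(\mathcal G)\cup\mathcal C(\mathcal G)\to\mathbb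 N$ is given by $\mathrm{mtr}(\omega)(\pi)=1$ if $\pi=\pi_\omega$ and $0$ for other paths $\pi$, and $\mathrm{mtr}(\omega)(\gamma)=|\Gamma|_\gamma$ for cycles $\gamma$. The $N$-dimensional de Bruijn graph $\mathcal D_N=(A^N,E)$ has vertex set $A^N$ and edge set $E=\{(av,vb)\mid a,b\in A,\ v\in A^{N-1}\}$. For a vertex $v\in A^N$ and a word $w=a_1\cdots a_m$, $\mathrm{walk}(v,w)=(v,v_1,\ldots,v_m)$ with $v_i=\mathrm{suff}_N(v\,a_1\cdots a_i)$ (for $w$ empty, $\mathrm{walk}(v,w)=(v)$). Multi-trace of a language $L\subseteq A^*$ of order $N$: $\mathrm{Mtr}_N(L)=\{\mathrm{mtr}(\mathrm{walk}(v,u))\mid v\in A^N,\ u\in A^*,\ vu\in L\}$, multi-traces taken in $\mathcal D_N$. *)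

theory Defs
  imports Main
begin

definition occ :: "'a list \<Rightarrow> 'a list \<Rightarrow> nat" where
  "occ w u = card {(x, y). x @ u @ y = w}"

definition WMIX :: "'a list list \<Rightarrow> 'a list set" where
  "WMIX ws = {w. \<forall>u \<in> set ws. \<forall>v \<in> set ws. occ w u = occ w v}"

definition suff :: "nat \<Rightarrow> 'a list \<Rightarrow> 'a list" where
  "suff n w = drop (length w - n) w"

definition deBruijn_edges :: "nat \<Rightarrow> ('a list \<times> 'a list) set" where
  "deBruijn_edges N = {(a # v, v @ [b]) | a b v. length v = N - 1}"

definition is_walk :: "('v \<times> 'v) set \<Rightarrow> 'v list \<Rightarrow> bool" where
  "is_walk E \<omega> \<longleftrightarrow> \<omega> \<noteq> [] \<and> (\<forall>i. Suc i < length \<omega> \<longrightarrow> (\<omega> ! i, \<omega> ! Suc i) \<in> E)"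

definition dec_step :: "'v list \<times> 'v list list \<Rightarrow> 'v \<Rightarrow> 'v list \<times> 'v list list" where
  "dec_step pg v' = (let (\<pi>, \<Gamma>) = pg in
     if v' \<notin> set \<pi> then (\<pi> @ [v'], \<Gamma>)
     else (takeWhile (\<lambda>x. x \<noteq> v') \<pi> @ [v'], \<Gamma> @ [dropWhile (\<lambda>x. x \<noteq> v') \<pi> @ [v']]))"

(* dec(\<omega>) = (path, sequence of cycles), by induction on the length of the walk *)
fun dec :: "'v list \<Rightarrow> 'v list \<times> 'v list list" where
  "dec [] = ([], [])"
| "dec (v # rest) = fold (\<lambda>v' pg. dec_step pg v') rest ([v], [])"

definition mtr :: "'v list \<Rightarrow> 'v list \<Rightarrow> nat" where
  "mtr \<omega> x = (if x = fst (dec \<omega>) then 1 else 0) + count_list (snd (dec \<omega>)) x"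

definition dbwalk :: "nat \<Rightarrow> 'a list \<Rightarrow> 'a list \<Rightarrow> 'a list list" where
  "dbwalk N v w = v # map (\<lambda>i. suff N (v @ take i w)) [1..<Suc (length w)]"

definition Mtr :: "nat \<Rightarrow> 'a list set \<Rightarrow> ('a list list \<Rightarrow> nat) set" where
  "Mtr N L = {mtr (dbwalk N v u) | v u. length v = N \<and> v @ u \<in> L}"

end

theory Submission
  imports Defs "HOL-Library.Multiset"
begin

definition S :: "'v list list \<Rightarrow> 'v multiset" where
  "S G = (\<Sum>g\<leftarrow>G. mset (tl g))"

lemma S_mset: "S G = sum_mset (image_mset (\<lambda>g. mset (tl g)) (mset G))"
  unfolding S_def by (metis mset_map sum_mset_sum_list)

lemma dec_step_inv:
  assumes "distinct p" "\<forall>g\<in>set G. \<not> distinct g" "dec_step (p, G) a = (p1, G1)"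
  shows "distinct p1 \<and> p1 \<noteq> [] \<and> last p1 = a \<and> (\<forall>g\<in>set G1. \<not> distinct g)
         \<and> mset p1 + S G1 = mset p + S G + {#a#}"
proof (cases "a \<in> set p")
  case False
  then show ?thesis using assms by (auto simp: dec_step_def)
next
  case True
  define t where "t = takeWhile (\<lambda>x. x \<noteq> a) p"
  define d where "d = dropWhile (\<lambda>x. x \<noteq> a) p"
  have pd: "p = t @ d" unfolding t_def d_def by simp
  have dne: "d \<noteq> []" using True unfolding d_def by (simp add: dropWhile_eq_Nil_conv)
  have hd: "hd d = a" using hd_dropWhile[of "\<lambda>x. x \<noteq> a" p] dne unfolding d_def by simp
  have d2: "d = a # tl d" using dne hd by (cases d) auto
  have at: "a \<notin> set t" unfolding t_def using set_takeWhileD by fastforce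
  have eq: "p1 = t @ [a]" "G1 = G @ [d @ [a]]" using assms(3) True
    by (auto simp: dec_step_def t_def d_def)
  have "distinct t" using assms(1) pd by simp
  moreover have "\<not> distinct (d @ [a])"
  proof -
    have "\<not> distinct ((a # tl d) @ [a])" by simp
    then show ?thesis using d2 by metis
  qed
  moreover have "mset p1 + S G1 = mset p + S G + {#a#}"
  proof -
    have md: "mset d = add_mset a (mset (tl d))" by (metis d2 mset.simps(2))
    have tl: "tl (d @ [a]) = tl d @ [a]" using dne by (cases d) auto
    show ?thesis unfolding eq S_def using md tl pd by simp
  qed
  moreover have "distinct (t @ [a])" using at \<open>distinct t\<close> by simp
  moreover have "\<forall>g\<in>set G1. \<not> distinct g" using eq(2) assms(2) \<open>\<not> distinct (d @ [a])\<close> by simp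
  moreover have "last (t @ [a]) = a" "t @ [a] \<noteq> []" by simp_all
  ultimately show ?thesis unfolding eq(1) by blast
qed

lemma fold_inv:
  assumes "distinct p" "p \<noteq> []" "\<forall>g\<in>set G. \<not> distinct g"
    "fold (\<lambda>v' pg. dec_step pg v') rest (p, G) = (p1, G1)"
  shows "distinct p1 \<and> p1 \<noteq> [] \<and> last p1 = last (last p # rest) \<and> (\<forall>g\<in>set G1. \<not> distinct g)
         \<and> mset p1 + S G1 = mset p + S G + mset rest"
  using assms
proof (induction rest arbitrary: p G)
  case Nil
  then show ?case by simp
next
  case (Cons a rest)
  obtain q H where qh: "dec_step (p, G) a = (q, H)" by (cases "dec_step (p, G) a")
  have i: "distinct q \<and> q \<noteq> [] \<and> last q = a \<and> (\<forall>g\<in>set H. \<not> distinct g)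
         \<and> mset q + S H = mset p + S G + {#a#}" using dec_step_inv[OF Cons.prems(1,3) qh] .
  have "fold (\<lambda>v' pg. dec_step pg v') rest (q, H) = (p1, G1)" using Cons.prems(4) qh by simp
  then have "distinct p1 \<and> p1 \<noteq> [] \<and> last p1 = last (last q # rest) \<and> (\<forall>g\<in>set G1. \<not> distinct g)
         \<and> mset p1 + S G1 = mset q + S H + mset rest" using Cons.IH i by blast
  then show ?case using i by (auto simp: add.assoc)
qed

lemma dec_inv:
  assumes "\<omega> \<noteq> []"
  shows "distinct (fst (dec \<omega>)) \<and> last (fst (dec \<omega>)) = last \<omega> \<and> (\<forall>g\<in>set (snd (dec \<omega>)). \<not> distinct g)
         \<and> mset (fst (dec \<omega>)) + S (snd (dec \<omega>)) = mset \<omega>"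
proof -
  obtain v rest where w: "\<omega> = v # rest" using assms by (cases \<omega>) auto
  obtain p1 G1 where e: "fold (\<lambda>v' pg. dec_step pg v') rest ([v], []) = (p1, G1)"
    by (cases "fold (\<lambda>v' pg. dec_step pg v') rest ([v], [])")
  have "distinct p1 \<and> p1 \<noteq> [] \<and> last p1 = last (last [v] # rest) \<and> (\<forall>g\<in>set G1. \<not> distinct g)
         \<and> mset p1 + S G1 = mset [v] + S [] + mset rest"
    by (rule fold_inv[OF _ _ _ e]) auto
  then show ?thesis using w e by (auto simp: S_def)
qed

lemma mtr_determines:
  assumes "\<omega>1 \<noteq> []" "\<omega>2 \<noteq> []" "mtr \<omega>1 = mtr \<omega>2"
  shows "mset \<omega>1 = mset \<omega>2 \<and> last \<omega>1 = last \<omega>2"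
proof -
  obtain p1 G1 where d1: "dec \<omega>1 = (p1, G1)" by (cases "dec \<omega>1")
  obtain p2 G2 where d2: "dec \<omega>2 = (p2, G2)" by (cases "dec \<omega>2")
  have i1: "distinct p1" "last p1 = last \<omega>1" "\<forall>g\<in>set G1. \<not> distinct g"
         "mset p1 + S G1 = mset \<omega>1"
    using dec_inv[OF assms(1)] d1 by auto
  have i2: "distinct p2" "last p2 = last \<omega>2" "\<forall>g\<in>set G2. \<not> distinct g"
         "mset p2 + S G2 = mset \<omega>2"
    using dec_inv[OF assms(2)] d2 by auto
  have m: "mtr \<omega>1 x = (if x = p1 then 1 else 0) + count_list G1 x" for x
    unfolding mtr_def d1 by simp
  have m2: "mtr \<omega>2 x = (if x = p2 then 1 else 0) + count_list G2 x" for x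
    unfolding mtr_def d2 by simp
  have n2: "p1 \<notin> set G2" using i1(1) i2(3) by blast
  have n1: "p1 \<notin> set G1" using i1(1) i1(3) by blast
  have c2: "count_list G2 p1 = 0" using n2 by (rule count_notin)
  have c1: "count_list G1 p1 = 0" using n1 by (rule count_notin)
  have "mtr \<omega>1 p1 = 1" using m[of p1] c1 by simp
  then have e: "mtr \<omega>2 p1 = 1" using assms(3) by simp
  have pp: "p1 = p2"
  proof (rule ccontr)
    assume "p1 \<noteq> p2"
    then have "mtr \<omega>2 p1 = 0" using m2[of p1] c2 by simp
    then show False using e by simp
  qed
  have "count_list G1 x = count_list G2 x" for x
    using m[of x] m2[of x] assms(3) pp by simp
  then have "mset G1 = mset G2" by (simp add: multiset_eq_iff count_mset)
  then have "S G1 = S G2" by (simp add: S_mset)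
  then show ?thesis using i1(2,4) i2(2,4) pp by simp
qed

lemma occ_pos:
  "occ w x = card {i. i + length x \<le> length w \<and> take (length x) (drop i w) = x}"
proof -
  let ?A = "{(p, s). p @ x @ s = w}"
  let ?B = "{i. i + length x \<le> length w \<and> take (length x) (drop i w) = x}"
  have "bij_betw (\<lambda>(p, s). length p) ?A ?B"
  proof (rule bij_betwI')
    fix a b assume "a \<in> ?A" "b \<in> ?A"
    then show "((\<lambda>(p, s). length p) a = (\<lambda>(p, s). length p) b) = (a = b)"
      by (cases a, cases b) (auto simp: append_eq_append_conv)
  next
    fix a assume "a \<in> ?A"
    then show "(\<lambda>(p, s). length p) a \<in> ?B" by (cases a) auto
  next
    fix i assume i: "i \<in> ?B"
    have "take i w @ x @ drop (i + length x) w = w"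
    proof -
      have "w = take i w @ drop i w" by simp
      also have "drop i w = take (length x) (drop i w) @ drop (length x) (drop i w)"
        by (rule append_take_drop_id[symmetric])
      also have "\<dots> = x @ drop (i + length x) w" using i by (simp add: add.commute)
      finally show ?thesis by simp
    qed
    moreover have "length (take i w) = i" using i by auto
    ultimately show "\<exists>a\<in>?A. i = (\<lambda>(p, s). length p) a"
      by (intro bexI[of _ "(take i w, drop (i + length x) w)"]) auto
  qed
  then show ?thesis unfolding occ_def by (rule bij_betw_same_card)
qed

lemma dbwalk_eq:
  assumes "length v = N"
  shows "dbwalk N v u = map (\<lambda>i. take N (drop i (v @ u))) [0..<Suc (length u)]"
proof (rule nth_equalityI)
  show "length (dbwalk N v u) = length (map (\<lambda>i. take N (drop i (v @ u))) [0..<Suc (length u)])"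
    by (simp add: dbwalk_def del: upt_Suc)
next
  fix i assume "i < length (dbwalk N v u)"
  then have i: "i \<le> length u" by (simp add: dbwalk_def del: upt_Suc)
  show "dbwalk N v u ! i = map (\<lambda>i. take N (drop i (v @ u))) [0..<Suc (length u)] ! i"
  proof (cases i)
    case 0
    then show ?thesis using assms by (cases u) (simp_all add: dbwalk_def del: upt_Suc)
  next
    case (Suc k)
    have "dbwalk N v u ! i = suff N (v @ take i u)"
      using i Suc by (simp add: dbwalk_def nth_Cons' del: upt_Suc)
    also have "\<dots> = drop i (v @ take i u)" using assms i by (simp add: suff_def)
    also have "\<dots> = take N (drop i (v @ u))"
    proof -
      have "take (N + i) (v @ u) = v @ take i u" using assms by simp
      moreover have "take N (drop i (v @ u)) = drop i (take (N + i) (v @ u))"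
        by (simp only: take_drop)
      ultimately show ?thesis by simp
    qed
    finally show ?thesis using i by (simp del: upt_Suc)
  qed
qed

definition Phi :: "nat \<Rightarrow> 'a list multiset \<Rightarrow> 'a list \<Rightarrow> 'a list \<Rightarrow> nat" where
  "Phi N M L x = size (filter_mset (\<lambda>f. take (length x) f = x) M)
     + card {j. 0 < j \<and> j + length x \<le> N \<and> take (length x) (drop j L) = x}"

lemma occ_Phi:
  assumes "length v = N" "length x \<le> N"
  shows "occ (v @ u) x = Phi N (mset (dbwalk N v u)) (last (dbwalk N v u)) x"
proof -
  define w where "w = v @ u"
  define n where "n = length u"
  define W where "W = dbwalk N v u"
  have lw: "length w = N + n" using assms by (simp add: w_def n_def)
  have W: "W = map (\<lambda>i. take N (drop i w)) [0..<Suc n]"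
    using dbwalk_eq[OF assms(1)] by (simp add: W_def w_def n_def)
  have lastW: "last W = drop n w" using W lw by simp
  let ?P = "\<lambda>i. take (length x) (drop i w) = x"
  define A1 where "A1 = {i. i \<le> n \<and> ?P i}"
  define A2 where "A2 = {i. n < i \<and> i + length x \<le> length w \<and> ?P i}"
  define B where "B = {j. 0 < j \<and> j + length x \<le> N \<and> take (length x) (drop j (last W)) = x}"
  have split: "{i. i + length x \<le> length w \<and> ?P i} = A1 \<union> A2"
    unfolding A1_def A2_def using lw assms(2) by auto
  have fin1: "finite A1" unfolding A1_def by auto
  have fin2: "finite A2" unfolding A2_def by (rule finite_subset[of _ "{..length w}"]) auto
  have disj: "A1 \<inter> A2 = {}" unfolding A1_def A2_def by auto
  have A2B: "A2 = (\<lambda>j. j + n) ` B"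
  proof
    show "A2 \<subseteq> (\<lambda>j. j + n) ` B"
    proof
      fix i assume i: "i \<in> A2"
      then have "i - n \<in> B" unfolding A2_def B_def lastW using lw
        by (auto simp: add.commute)
      moreover have "i = (i - n) + n" using i unfolding A2_def by auto
      ultimately show "i \<in> (\<lambda>j. j + n) ` B" by blast
    qed
  next
    show "(\<lambda>j. j + n) ` B \<subseteq> A2"
      unfolding A2_def B_def lastW using lw by (auto simp: add.commute)
  qed
  have cB: "card A2 = card B" unfolding A2B by (rule card_image) (simp add: inj_on_def)
  have "card A1 = card {i. i < length W \<and> take (length x) (W ! i) = x}"
  proof -
    have "{i. i < length W \<and> take (length x) (W ! i) = x} = A1"
      unfolding A1_def W using assms(2)
      by (auto simp del: upt_Suc simp: min_def less_Suc_eq_le)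
    then show ?thesis by simp
  qed
  also have "\<dots> = length (filter (\<lambda>f. take (length x) f = x) W)"
    by (simp add: length_filter_conv_card)
  also have "\<dots> = size (filter_mset (\<lambda>f. take (length x) f = x) (mset W))"
    by (metis mset_filter size_mset)
  finally have c1: "card A1 = size (filter_mset (\<lambda>f. take (length x) f = x) (mset W))" .
  have "occ w x = card A1 + card A2"
    unfolding occ_pos split using fin1 fin2 disj by (rule card_Un_disjoint)
  then show ?thesis using c1 cB unfolding Phi_def B_def W_def w_def by simp
qed

lemma dbwalk_ne: "dbwalk N v u \<noteq> []" by (simp add: dbwalk_def)

lemma transfer:
  assumes len: "\<forall>x\<in>set ws'. length x \<le> N"
    and short: "WMIX ws \<inter> {w. length w < N} = WMIX ws' \<inter> {w. length w < N}"
    and mt: "Mtr N (WMIX ws) \<subseteq> Mtr N (WMIX ws')"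
  shows "WMIX ws \<subseteq> WMIX ws'"
proof
  fix w assume w: "w \<in> WMIX ws"
  show "w \<in> WMIX ws'"
  proof (cases "length w < N")
    case True
    then show ?thesis using w short by blast
  next
    case False
    define v where "v = take N w"
    define u where "u = drop N w"
    have lv: "length v = N" using False by (simp add: v_def)
    have wvu: "w = v @ u" by (simp add: v_def u_def)
    have "mtr (dbwalk N v u) \<in> Mtr N (WMIX ws)" unfolding Mtr_def
      by (rule CollectI, rule exI[of _ v], rule exI[of _ u]) (use lv w wvu in simp)
    then have "mtr (dbwalk N v u) \<in> Mtr N (WMIX ws')" using mt by blast
    then obtain v' u' where lv': "length v' = N" and in': "v' @ u' \<in> WMIX ws'"
      and me: "mtr (dbwalk N v' u') = mtr (dbwalk N v u)"
      unfolding Mtr_def by auto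
    have eqs: "mset (dbwalk N v' u') = mset (dbwalk N v u) \<and> last (dbwalk N v' u') = last (dbwalk N v u)"
      by (rule mtr_determines[OF dbwalk_ne dbwalk_ne me])
    have oc: "occ w x = occ (v' @ u') x" if "x \<in> set ws'" for x
    proof -
      have lx: "length x \<le> N" using len that by blast
      show ?thesis unfolding wvu occ_Phi[OF lv lx] occ_Phi[OF lv' lx] using eqs by simp
    qed
    have "\<forall>a\<in>set ws'. \<forall>b\<in>set ws'. occ (v' @ u') a = occ (v' @ u') b"
      using in' unfolding WMIX_def by (rule CollectD)
    then have "\<forall>a\<in>set ws'. \<forall>b\<in>set ws'. occ w a = occ w b" using oc by metis
    then show ?thesis unfolding WMIX_def by (rule CollectI)
  qed
qed

theorem theorem2:
  fixes ws ws' :: "('a::finite) list list" and N :: nat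
  assumes "N = Max (length ` set (ws @ ws'))"
    and "N \<ge> 1"
  shows "WMIX ws = WMIX ws' \<longleftrightarrow>
           (WMIX ws \<inter> {w. length w < N} = WMIX ws' \<inter> {w. length w < N}
            \<and> Mtr N (WMIX ws) = Mtr N (WMIX ws'))"
proof
  assume "WMIX ws = WMIX ws'"
  then show "WMIX ws \<inter> {w. length w < N} = WMIX ws' \<inter> {w. length w < N}
            \<and> Mtr N (WMIX ws) = Mtr N (WMIX ws')" by simp
next
  assume h: "WMIX ws \<inter> {w. length w < N} = WMIX ws' \<inter> {w. length w < N}
            \<and> Mtr N (WMIX ws) = Mtr N (WMIX ws')"
  have len: "\<forall>x\<in>set (ws @ ws'). length x \<le> N"
  proof
    fix x assume "x \<in> set (ws @ ws')"
    then have "length x \<in> length ` set (ws @ ws')" by simp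
    then show "length x \<le> N" unfolding assms(1) by (rule Max_ge[rotated]) simp
  qed
  have "WMIX ws \<subseteq> WMIX ws'"
    by (rule transfer) (use len h in auto)
  moreover have "WMIX ws' \<subseteq> WMIX ws"
    by (rule transfer) (use len h in auto)
  ultimately show "WMIX ws = WMIX ws'" by blast
qed

end
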